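(* Let $\mathbb{T}=\mathbb{R}/2\pi\mathbb{Z}$, let $(a_k)_{k\ge1},(b_k)_{k\ge1}$ be independent stationary centered Gaussian sequences with common correlation function $\rho$ ($\mathbb{E}[a_ka_l]=\mathbb{E}[b_kb_l]=\rho(k-l)$), whose spectral measure $\mu$ (defined by $\rho(k)=\frac1{2\pi}\int_{\mathbb{T}}e^{-iku}d\mu(u)$) has a continuous positive density $\psi$ with respect to Lebesgue measure on $\mathbb{T}$. Let $X_n(s)=\frac{1}{\sqrt n}\sum_{k=1}^n(a_k\cos(ks)+b_k\sin(ks))$ and $r_n(s,t)=\mathbb{E}[X_n(s)X_n(t)]$. Let $a,b\in\{0,1,2,3,4\}$. Then, uniformly for $s\in\mathbb{T}$ and $u,v$ in any compact subset of $\mathbb{R}$, \[\lim_{n\to+\infty}\frac{1}{n^{a+b}}\,r_n^{(a,b)}\Big(s+\frac un,s+\frac vn\Big)=\psi(s)(-1)^b\,\mathrm{sinc}^{(a+b)}(u-v).\]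
   Context: $r_n^{(a,b)}=\partial_1^a\partial_2^b r_n$; $\mathrm{sinc}(x)=\sin x/x$ and $\mathrm{sinc}^{(m)}$ is its $m$-th derivative. *)

theory Defs
  imports "HOL-Probability.Probability"
begin

definition centered_gaussian_rv :: "'w measure \<Rightarrow> ('w \<Rightarrow> real) \<Rightarrow> bool" where
  "centered_gaussian_rv M X \<longleftrightarrow>
     X \<in> borel_measurable M \<and>
     ((AE \<omega> in M. X \<omega> = 0) \<or> (\<exists>\<sigma>>0. distributed M lborel X (normal_density 0 \<sigma>)))"

definition centered_gaussian_seq :: "'w measure \<Rightarrow> (nat \<Rightarrow> 'w \<Rightarrow> real) \<Rightarrow> bool" where
  "centered_gaussian_seq M a \<longleftrightarrow>
     (\<forall>I c. finite I \<longrightarrow> I \<subseteq> {1..} \<longrightarrow> centered_gaussian_rv M (\<lambda>\<omega>. \<Sum>k\<in>I. c k * a k \<omega>))"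

definition Xn :: "(nat \<Rightarrow> 'w \<Rightarrow> real) \<Rightarrow> (nat \<Rightarrow> 'w \<Rightarrow> real) \<Rightarrow> nat \<Rightarrow> real \<Rightarrow> 'w \<Rightarrow> real" where
  "Xn a b n s \<omega> = (1 / sqrt (real n)) *
     (\<Sum>k=1..n. a k \<omega> * cos (real k * s) + b k \<omega> * sin (real k * s))"

definition rn :: "'w measure \<Rightarrow> (nat \<Rightarrow> 'w \<Rightarrow> real) \<Rightarrow> (nat \<Rightarrow> 'w \<Rightarrow> real) \<Rightarrow> nat \<Rightarrow> real \<Rightarrow> real \<Rightarrow> real" where
  "rn M a b n s t = prob_space.expectation M (\<lambda>\<omega>. Xn a b n s \<omega> * Xn a b n t \<omega>)"

definition pderiv2 :: "nat \<Rightarrow> nat \<Rightarrow> (real \<Rightarrow> real \<Rightarrow> real) \<Rightarrow> real \<Rightarrow> real \<Rightarrow> real" where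
  "pderiv2 p q f s t = (deriv ^^ p) (\<lambda>x. (deriv ^^ q) (\<lambda>y. f x y) t) s"

end

theory Submission
  imports Defs
begin


lemma int_cos_has:
  fixes j :: int
  shows "((\<lambda>x. cos (of_int j * x + c)) has_integral (if j = 0 then 2*pi*cos c else 0)) {0..2*pi}"
proof (cases "j = 0")
  case True
  then show ?thesis using has_integral_const_real[of "cos c" 0 "2*pi"] by simp
next
  case False
  have "((\<lambda>x. cos (of_int j * x + c)) has_integral
         (sin (of_int j * (2*pi) + c) / of_int j - sin (of_int j * 0 + c) / of_int j)) {0..2*pi}"
    apply (rule fundamental_theorem_of_calculus)
    using False by (auto intro!: derivative_eq_intros simp: has_real_derivative_iff_has_vector_derivative[symmetric])
  moreover have "sin (of_int j * (2*pi) + c) = sin c"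
    using sin_int_2pin[of j] cos_int_2pin[of j] by (simp add: sin_add mult.commute)
  ultimately show ?thesis using False by simp
qed

definition wt :: "nat \<Rightarrow> nat \<Rightarrow> nat \<Rightarrow> real" where "wt p n k = (real k / real n) ^ p"
definition Acx :: "nat \<Rightarrow> nat \<Rightarrow> real \<Rightarrow> complex" where
  "Acx p n \<alpha> = (\<Sum>k=1..n. of_real (wt p n k) * cis (real k * \<alpha>))"
definition Hs :: "nat \<Rightarrow> nat \<Rightarrow> nat \<Rightarrow> real \<Rightarrow> real \<Rightarrow> real \<Rightarrow> real" where
  "Hs p q n \<theta> \<alpha> \<beta> = (\<Sum>k=1..n. \<Sum>l=1..n. wt p n k * wt q n l * cos (real k * \<alpha> - real l * \<beta> + \<theta>))"

lemma Hs_Re: "Hs p q n \<theta> \<alpha> \<beta> = Re (cis \<theta> * Acx p n \<alpha> * cnj (Acx q n \<beta>))"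
proof -
  have "cis \<theta> * Acx p n \<alpha> * cnj (Acx q n \<beta>) =
     (\<Sum>k=1..n. \<Sum>l=1..n. of_real (wt p n k * wt q n l) * cis (real k * \<alpha> - real l * \<beta> + \<theta>))"
  proof -
    have "Acx p n \<alpha> * cnj (Acx q n \<beta>) = (\<Sum>k=1..n. \<Sum>l=1..n.
       (of_real (wt p n k) * cis (real k * \<alpha>)) * cnj (of_real (wt q n l) * cis (real l * \<beta>)))"
      unfolding Acx_def cnj_sum sum_product ..
    also have "\<dots> = (\<Sum>k=1..n. \<Sum>l=1..n. of_real (wt p n k * wt q n l) * cis (real k * \<alpha> - real l * \<beta>))"
      by (intro sum.cong refl) (simp add: cis_cnj cis_mult)
    finally have "cis \<theta> * Acx p n \<alpha> * cnj (Acx q n \<beta>) = cis \<theta> * (\<Sum>k=1..n. \<Sum>l=1..n. of_real (wt p n k * wt q n l) * cis (real k * \<alpha> - real l * \<beta>))"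
      by (simp add: mult.assoc)
    also have "\<dots> = (\<Sum>k=1..n. \<Sum>l=1..n. of_real (wt p n k * wt q n l) * cis (real k * \<alpha> - real l * \<beta> + \<theta>))"
      unfolding sum_distrib_left
      by (intro sum.cong refl) (simp add: mult.left_commute cis_mult add.commute)
    finally show ?thesis .
  qed
  then show ?thesis unfolding Hs_def by (simp add: Re_sum)
qed

lemma Hs_bound: "\<bar>Hs p q n \<theta> \<alpha> \<beta>\<bar> \<le> cmod (Acx p n \<alpha>) * cmod (Acx q n \<beta>)"
proof -
  have "\<bar>Hs p q n \<theta> \<alpha> \<beta>\<bar> \<le> cmod (cis \<theta> * Acx p n \<alpha> * cnj (Acx q n \<beta>))"
    unfolding Hs_Re by (rule abs_Re_le_cmod)
  also have "\<dots> = cmod (Acx p n \<alpha>) * cmod (Acx q n \<beta>)" by (simp add: norm_mult)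
  finally show ?thesis .
qed

lemma Hs_sq: "Hs p p n 0 \<alpha> \<alpha> = (cmod (Acx p n \<alpha>))^2"
  unfolding Hs_Re by (simp add: complex_mult_cnj cmod_def)

lemma Hs_integral:
  "((\<lambda>x. Hs p q n \<theta> (S - x) (T - x)) has_integral
     2*pi * (\<Sum>k=1..n. wt p n k * wt q n k * cos (real k * S - real k * T + \<theta>))) {0..2*pi}"
proof -
  have eq: "Hs p q n \<theta> (S - x) (T - x) = (\<Sum>k=1..n. \<Sum>l=1..n. wt p n k * wt q n l *
      cos (of_int (int l - int k) * x + (real k * S - real l * T + \<theta>)))" for x
    unfolding Hs_def by (intro sum.cong refl) (simp add: algebra_simps)
  have "((\<lambda>x. \<Sum>k=1..n. \<Sum>l=1..n. wt p n k * wt q n l *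
      cos (of_int (int l - int k) * x + (real k * S - real l * T + \<theta>))) has_integral
      (\<Sum>k=1..n. \<Sum>l=1..n. wt p n k * wt q n l *
        (if int l - int k = 0 then 2*pi*cos (real k * S - real l * T + \<theta>) else 0))) {0..2*pi}"
    by (intro has_integral_sum finite_atLeastAtMost ballI has_integral_mult_right int_cos_has)
  also have "(\<Sum>k=1..n. \<Sum>l=1..n. wt p n k * wt q n l *
        (if int l - int k = 0 then 2*pi*cos (real k * S - real l * T + \<theta>) else 0))
      = (\<Sum>k=1..n. 2*pi * (wt p n k * wt q n k * cos (real k * S - real k * T + \<theta>)))"
  proof (intro sum.cong refl)
    fix k assume k: "k \<in> {1..n}"
    have "(\<Sum>l=1..n. wt p n k * wt q n l *
        (if int l - int k = 0 then 2*pi*cos (real k * S - real l * T + \<theta>) else 0))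
       = (\<Sum>l=1..n. if l = k then wt p n k * wt q n l * (2*pi*cos (real k * S - real l * T + \<theta>)) else 0)"
      by (intro sum.cong refl) auto
    also have "\<dots> = 2*pi * (wt p n k * wt q n k * cos (real k * S - real k * T + \<theta>))"
      using k by (simp add: sum.delta)
    finally show "(\<Sum>l=1..n. wt p n k * wt q n l *
        (if int l - int k = 0 then 2*pi*cos (real k * S - real l * T + \<theta>) else 0))
       = 2*pi * (wt p n k * wt q n k * cos (real k * S - real k * T + \<theta>))" .
  qed
  finally show ?thesis unfolding eq by (simp add: sum_distrib_left)
qed




lemma abel_id:
  fixes w :: "nat \<Rightarrow> real" and z :: complex
  assumes "w 0 = 0"
  shows "(z - 1) * (\<Sum>k=1..N. of_real (w k) * z^k) =
         of_real (w N) * z^(Suc N) - (\<Sum>k=1..N. of_real (w k - w (k-1)) * z^k)"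
proof (induction N)
  case 0 then show ?case using assms by simp
next
  case (Suc N)
  have "(z - 1) * (\<Sum>k=1..Suc N. of_real (w k) * z^k) =
        (z - 1) * (\<Sum>k=1..N. of_real (w k) * z^k) + (z - 1) * (of_real (w (Suc N)) * z^Suc N)"
    by (simp add: distrib_left)
  also have "\<dots> = of_real (w N) * z^(Suc N) - (\<Sum>k=1..N. of_real (w k - w (k-1)) * z^k)
       + (z - 1) * (of_real (w (Suc N)) * z^Suc N)" using Suc by simp
  also have "\<dots> = of_real (w (Suc N)) * z^(Suc (Suc N)) - (\<Sum>k=1..Suc N. of_real (w k - w (k-1)) * z^k)"
    by (simp add: algebra_simps)
  finally show ?case .
qed

lemma telescope_w:
  fixes w :: "nat \<Rightarrow> real"
  shows "(\<Sum>k=1..N. w k - w (k-1)) = w N - w 0"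
  by (induction N) auto

lemma abel_bound:
  fixes w :: "nat \<Rightarrow> real" and z :: complex
  assumes "w 0 = 0" "mono w" "cmod z = 1"
  shows "cmod (z - 1) * cmod (\<Sum>k=1..N. of_real (w k) * z^k) \<le> 2 * w N"
proof -
  have "cmod (z - 1) * cmod (\<Sum>k=1..N. of_real (w k) * z^k) =
        cmod (of_real (w N) * z^(Suc N) - (\<Sum>k=1..N. of_real (w k - w (k-1)) * z^k))"
    using abel_id[of w, OF assms(1)] by (metis norm_mult)
  also have "\<dots> \<le> cmod (of_real (w N) * z^(Suc N)) + cmod (\<Sum>k=1..N. of_real (w k - w (k-1)) * z^k)"
    by (rule norm_triangle_ineq4)
  also have "cmod (\<Sum>k=1..N. of_real (w k - w (k-1)) * z^k) \<le> (\<Sum>k=1..N. cmod (of_real (w k - w (k-1)) * z^k))"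
    by (rule norm_sum)
  also have "(\<Sum>k=1..N. cmod (of_real (w k - w (k-1)) * z^k)) = (\<Sum>k=1..N. w k - w (k-1))"
  proof (intro sum.cong refl)
    fix k assume "k \<in> {1..N}"
    have "w (k-1) \<le> w k" using assms(2) by (simp add: monoD)
    then show "cmod (of_real (w k - w (k-1)) * z^k) = w k - w (k-1)"
      using assms(3) by (simp only: norm_mult norm_power norm_of_real power_one mult_1_right)
  qed
  also have "\<dots> = w N" using telescope_w[of w N] assms(1) by simp
  also have "cmod (of_real (w N) * z^(Suc N)) = w N"
  proof -
    have "0 \<le> w N" using assms(1,2) by (metis le0 monoD)
    then show ?thesis using assms(3) by (simp only: norm_mult norm_power norm_of_real power_one mult_1_right abs_of_nonneg)
  qed
  finally show ?thesis by simp
qed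

lemma cmod_cis_minus_1: "cmod (cis a - 1) = 2 * \<bar>sin (a/2)\<bar>"
proof -
  have c: "cos a = 1 - 2 * (sin (a/2))^2" using cos_double_sin[of "a/2"] by simp
  have s: "sin a = 2 * sin (a/2) * cos (a/2)" using sin_double[of "a/2"] by simp
  have "(cmod (cis a - 1))^2 = (cos a - 1)^2 + (sin a)^2"
    by (simp add: cmod_def)
  also have "\<dots> = 4 * (sin (a/2))^2 * ((sin (a/2))^2 + (cos (a/2))^2)"
    unfolding c s power2_eq_square by algebra
  also have "\<dots> = (2 * \<bar>sin (a/2)\<bar>)^2"
    by (simp only: sin_cos_squared_add mult_1_right power_mult_distrib power2_abs) simp
  finally show ?thesis
    by (metis abs_ge_zero mult_nonneg_nonneg norm_ge_zero power2_eq_iff_nonneg zero_le_numeral)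
qed




lemma riemann_lip:
  fixes f :: "real \<Rightarrow> real" and n :: nat
  assumes cont: "continuous_on {0..1} f"
    and lip: "\<And>x y. x \<in> {0..1} \<Longrightarrow> y \<in> {0..1} \<Longrightarrow> \<bar>f x - f y\<bar> \<le> L * \<bar>x - y\<bar>"
    and n: "n > 0"
  shows "\<bar>(\<Sum>k=1..n. f (real k / real n)) / real n - integral {0..1} f\<bar> \<le> L / real n"
proof -
  have L: "L \<ge> 0" using lip[of 0 1] by (smt (verit) atLeastAtMost_iff mult_nonneg_nonneg zero_le_mult_iff abs_ge_zero)
  have main: "N \<le> n \<Longrightarrow> \<bar>(\<Sum>k=1..N. f (real k / real n)) / real n - integral {0..real N / real n} f\<bar>
      \<le> real N * L / (real n)^2" for N
  proof (induction N)
    case 0 then show ?case by simp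
  next
    case (Suc N)
    define a where "a = real N / real n"
    define b where "b = real (Suc N) / real n"
    have ab: "0 \<le> a" "a \<le> b" "b \<le> 1" "b - a = 1 / real n"
      using Suc.prems n by (auto simp: a_def b_def divide_simps)
    have contb: "continuous_on {0..b} f" using cont ab by (auto intro: continuous_on_subset)
    have split: "integral {0..b} f = integral {0..a} f + integral {a..b} f"
      using Henstock_Kurzweil_Integration.integral_combine[where a=0 and c=a and b=b and f=f] ab integrable_continuous_interval[OF contb] by simp
    have cab: "continuous_on {a..b} f" using cont ab by (auto intro: continuous_on_subset)
    have "integral {a..b} (\<lambda>x. f b - f x) = f b * (b - a) - integral {a..b} f"
    proof -
      have "(\<lambda>x. f b) integrable_on {a..b}" by (intro integrable_continuous_interval continuous_intros)
      then show ?thesis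
        using integral_diff[of "\<lambda>x. f b" "{a..b}" f] integrable_continuous_interval[OF cab] ab
        by simp
    qed
    moreover have "norm (integral {a..b} (\<lambda>x. f b - f x)) \<le> (L / real n) * (b - a)"
    proof (rule integral_bound)
      show "a \<le> b" by fact
      show "continuous_on {a..b} (\<lambda>x. f b - f x)" using cab by (intro continuous_intros)
      fix t assume t: "t \<in> {a..b}"
      have "\<bar>f b - f t\<bar> \<le> L * \<bar>b - t\<bar>" using t ab by (intro lip) auto
      also have "\<dots> \<le> L * (1 / real n)" using t ab L by (intro mult_left_mono) auto
      finally show "norm (f b - f t) \<le> L / real n" by simp
    qed
    ultimately have step: "\<bar>f b / real n - integral {a..b} f\<bar> \<le> L / (real n)^2"
      using ab n by (simp add: power2_eq_square)
    have IH: "\<bar>(\<Sum>k=1..N. f (real k / real n)) / real n - integral {0..a} f\<bar> \<le> real N * L / (real n)^2"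
      using Suc by (simp add: a_def)
    have "(\<Sum>k=1..Suc N. f (real k / real n)) / real n - integral {0..b} f =
        ((\<Sum>k=1..N. f (real k / real n)) / real n - integral {0..a} f) + (f b / real n - integral {a..b} f)"
    proof -
      have "(\<Sum>k=1..Suc N. f (real k / real n)) = (\<Sum>k=1..N. f (real k / real n)) + f b"
        by (simp add: b_def)
      then show ?thesis unfolding split by (simp add: add_divide_distrib)
    qed
    then have "\<bar>(\<Sum>k=1..Suc N. f (real k / real n)) / real n - integral {0..b} f\<bar> \<le>
        real N * L / (real n)^2 + L / (real n)^2" using IH step by linarith
    then show ?case by (simp add: b_def add_divide_distrib distrib_right)
  qed
  from main[of n] n show ?thesis by (simp add: power2_eq_square)
qed




definition gm :: "nat \<Rightarrow> real \<Rightarrow> real" where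
  "gm m w = integral {0..1} (\<lambda>x. x ^ m * cos (x * w + real m * pi / 2))"

lemma gm_deriv: "(gm m has_real_derivative gm (Suc m) w) (at w)"
proof -
  have "((\<lambda>w. integral (cbox 0 1) (\<lambda>x. x ^ m * cos (x * w + real m * pi / 2))) has_field_derivative
        integral (cbox 0 1) (\<lambda>x. x ^ Suc m * cos (x * w + real (Suc m) * pi / 2))) (at w within UNIV)"
  proof (rule leibniz_rule_field_derivative)
    fix w :: real and x :: real
    have "cos (x * w + real (Suc m) * pi / 2) = - sin (x * w + real m * pi / 2)"
      by (simp add: minus_sin_cos_eq distrib_right add_divide_distrib algebra_simps)
    then show "((\<lambda>w. x ^ m * cos (x * w + real m * pi / 2)) has_field_derivative
        x ^ Suc m * cos (x * w + real (Suc m) * pi / 2)) (at w within UNIV)"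
      by (auto intro!: derivative_eq_intros)
  next
    fix w :: real
    show "(\<lambda>x. x ^ m * cos (x * w + real m * pi / 2)) integrable_on cbox 0 1"
      by (intro integrable_continuous continuous_intros)
  next
    show "continuous_on (UNIV \<times> cbox 0 1) (\<lambda>(w, x). x ^ Suc m * cos (x * w + real (Suc m) * pi / 2))"
      by (simp add: split_beta, intro continuous_intros)
  qed auto
  then show ?thesis unfolding gm_def by (simp add: cbox_interval)
qed

lemma gm_0: "gm 0 = sinc"
proof
  fix w :: real
  show "gm 0 w = sinc w"
  proof (cases "w = 0")
    case True then show ?thesis by (simp add: gm_def)
  next
    case False
    have "((\<lambda>x. cos (x * w)) has_integral (sin (1 * w) / w - sin (0 * w) / w)) {0..1}"
      apply (rule fundamental_theorem_of_calculus)
      using False by (auto intro!: derivative_eq_intros simp: has_real_derivative_iff_has_vector_derivative[symmetric])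
    then show ?thesis using False by (simp add: gm_def integral_unique)
  qed
qed

lemma deriv_sinc: "(deriv ^^ m) sinc = gm m"
proof (induction m)
  case 0 then show ?case by (simp add: gm_0)
next
  case (Suc m)
  have "(deriv ^^ Suc m) sinc = deriv (gm m)" using Suc by simp
  also have "\<dots> = gm (Suc m)" by (rule ext, rule DERIV_imp_deriv, rule gm_deriv)
  finally show ?case .
qed

lemma abs_cos_diff: "\<bar>cos (a::real) - cos b\<bar> \<le> \<bar>a - b\<bar>"
proof -
  have "\<bar>cos a - cos b\<bar> = 2 * \<bar>sin ((a + b) / 2)\<bar> * \<bar>sin ((b - a) / 2)\<bar>"
    by (simp add: cos_diff_cos abs_mult)
  also have "\<dots> \<le> 2 * 1 * \<bar>(b - a) / 2\<bar>"
    by (intro mult_mono abs_sin_x_le_abs_x) auto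
  finally show ?thesis by simp
qed

lemma abs_sin_diff: "\<bar>sin (a::real) - sin b\<bar> \<le> \<bar>a - b\<bar>"
proof -
  have "\<bar>sin a - sin b\<bar> = 2 * \<bar>sin ((a - b) / 2)\<bar> * \<bar>cos ((a + b) / 2)\<bar>"
    by (simp add: sin_diff_sin abs_mult)
  also have "\<dots> \<le> 2 * \<bar>(a - b) / 2\<bar> * 1"
    by (intro mult_mono abs_sin_x_le_abs_x) auto
  finally show ?thesis by simp
qed

lemma abs_power_diff:
  fixes x y :: real
  assumes "x \<in> {0..1}" "y \<in> {0..1}"
  shows "\<bar>x ^ m - y ^ m\<bar> \<le> real m * \<bar>x - y\<bar>"
proof (induction m)
  case 0 then show ?case by simp
next
  case (Suc m)
  have "x ^ Suc m - y ^ Suc m = x * (x ^ m - y ^ m) + y ^ m * (x - y)" by (simp add: algebra_simps)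
  then have "\<bar>x ^ Suc m - y ^ Suc m\<bar> \<le> \<bar>x\<bar> * \<bar>x ^ m - y ^ m\<bar> + \<bar>y ^ m\<bar> * \<bar>x - y\<bar>"
    by (metis abs_mult abs_triangle_ineq)
  also have "\<dots> \<le> 1 * (real m * \<bar>x - y\<bar>) + 1 * \<bar>x - y\<bar>"
    using assms Suc by (intro add_mono mult_mono) (auto simp: power_abs power_le_one)
  finally show ?case by (simp add: algebra_simps)
qed

lemma lip_fm:
  fixes x y w :: real
  assumes "x \<in> {0..1}" "y \<in> {0..1}"
  shows "\<bar>x ^ m * cos (x * w + c) - y ^ m * cos (y * w + c)\<bar> \<le> (real m + \<bar>w\<bar>) * \<bar>x - y\<bar>"
proof -
  have "x ^ m * cos (x * w + c) - y ^ m * cos (y * w + c) =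
      (x ^ m - y ^ m) * cos (x * w + c) + y ^ m * (cos (x * w + c) - cos (y * w + c))"
    by (simp add: algebra_simps)
  then have "\<bar>x ^ m * cos (x * w + c) - y ^ m * cos (y * w + c)\<bar> \<le>
      \<bar>x ^ m - y ^ m\<bar> * \<bar>cos (x * w + c)\<bar> + \<bar>y ^ m\<bar> * \<bar>cos (x * w + c) - cos (y * w + c)\<bar>"
    by (metis abs_mult abs_triangle_ineq)
  also have "\<dots> \<le> (real m * \<bar>x - y\<bar>) * 1 + 1 * \<bar>(x * w + c) - (y * w + c)\<bar>"
    using assms by (intro add_mono mult_mono abs_power_diff abs_cos_diff) (auto simp: power_abs power_le_one)
  also have "\<bar>(x * w + c) - (y * w + c)\<bar> = \<bar>w\<bar> * \<bar>x - y\<bar>"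
    by (simp add: abs_mult[symmetric] algebra_simps)
  finally show ?thesis by (simp add: algebra_simps)
qed




lemma deriv_cos_sum:
  fixes c \<alpha> \<beta> :: "'i \<Rightarrow> real"
  assumes "finite I"
  shows "(deriv ^^ j) (\<lambda>y. \<Sum>i\<in>I. c i * cos (\<alpha> i * y + \<beta> i)) =
         (\<lambda>y. \<Sum>i\<in>I. c i * \<alpha> i ^ j * cos (\<alpha> i * y + \<beta> i + real j * pi / 2))"
proof (induction j)
  case 0 then show ?case by simp
next
  case (Suc j)
  have "(deriv ^^ Suc j) (\<lambda>y. \<Sum>i\<in>I. c i * cos (\<alpha> i * y + \<beta> i)) =
        deriv (\<lambda>y. \<Sum>i\<in>I. c i * \<alpha> i ^ j * cos (\<alpha> i * y + \<beta> i + real j * pi / 2))"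
    using Suc by simp
  also have "\<dots> = (\<lambda>y. \<Sum>i\<in>I. c i * \<alpha> i ^ Suc j * cos (\<alpha> i * y + \<beta> i + real (Suc j) * pi / 2))"
  proof (rule ext, rule DERIV_imp_deriv)
    fix y
    have e: "cos (\<alpha> i * y + \<beta> i + real (Suc j) * pi / 2) = - sin (\<alpha> i * y + \<beta> i + real j * pi / 2)" for i
      by (simp add: minus_sin_cos_eq distrib_right add_divide_distrib algebra_simps)
    show "((\<lambda>y. \<Sum>i\<in>I. c i * \<alpha> i ^ j * cos (\<alpha> i * y + \<beta> i + real j * pi / 2)) has_real_derivative
        (\<Sum>i\<in>I. c i * \<alpha> i ^ Suc j * cos (\<alpha> i * y + \<beta> i + real (Suc j) * pi / 2))) (at y)"
      unfolding e
      by (rule derivative_eq_intros refl | simp)+ (simp add: sum_negf[symmetric] algebra_simps)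
  qed
  finally show ?case .
qed




lemma per_nat:
  fixes \<psi> :: "real \<Rightarrow> real"
  assumes per: "\<And>x. \<psi> (x + 2 * pi) = \<psi> x"
  shows "\<psi> (x + 2 * pi * real n) = \<psi> x"
proof (induction n)
  case 0 then show ?case by simp
next
  case (Suc n)
  have "\<psi> (x + 2 * pi * real (Suc n)) = \<psi> ((x + 2 * pi * real n) + 2 * pi)"
    by (simp add: algebra_simps)
  then show ?case using per Suc by simp
qed

lemma per_int:
  fixes \<psi> :: "real \<Rightarrow> real"
  assumes per: "\<And>x. \<psi> (x + 2 * pi) = \<psi> x"
  shows "\<psi> (x + 2 * pi * real_of_int j) = \<psi> x"
proof (cases "j \<ge> 0")
  case True
  then obtain n where "j = int n" by (metis nonneg_int_cases)
  then show ?thesis using per_nat[of \<psi>, OF per] by simp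
next
  case False
  then obtain n where n: "j = - int n" by (metis nonpos_int_cases linear)
  have "\<psi> x = \<psi> ((x - 2 * pi * real n) + 2 * pi * real n)" by simp
  also have "\<dots> = \<psi> (x - 2 * pi * real n)" by (rule per_nat[of \<psi>, OF per])
  finally show ?thesis using n by simp
qed

lemma reduce_2pi:
  fixes x :: real
  obtains x0 j where "x0 \<in> {0..2*pi}" "x = x0 + 2 * pi * real_of_int j"
proof -
  define j where "j = \<lfloor>x / (2*pi)\<rfloor>"
  have "real_of_int j \<le> x / (2*pi)" "x / (2*pi) < real_of_int j + 1"
    unfolding j_def by linarith+
  then have "2*pi * real_of_int j \<le> x" "x < 2*pi * real_of_int j + 2*pi"
    by (simp_all add: field_simps)
  then show ?thesis using that[of "x - 2*pi*real_of_int j" j] by auto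
qed

lemma psi_bounded:
  fixes \<psi> :: "real \<Rightarrow> real"
  assumes cont: "continuous_on UNIV \<psi>" and per: "\<And>x. \<psi> (x + 2 * pi) = \<psi> x"
  obtains B where "B > 0" "\<And>x. \<bar>\<psi> x\<bar> \<le> B"
proof -
  have "bounded (\<psi> ` {0..2*pi})"
    by (intro compact_imp_bounded compact_continuous_image continuous_on_subset[OF cont]) auto
  then obtain B where B: "\<And>y. y \<in> \<psi> ` {0..2*pi} \<Longrightarrow> norm y \<le> B" by (auto simp: bounded_iff)
  have bnd: "\<bar>\<psi> x\<bar> \<le> B" for x
  proof -
    obtain x0 j where "x0 \<in> {0..2*pi}" "x = x0 + 2 * pi * real_of_int j" by (rule reduce_2pi)
    then show ?thesis using B[of "\<psi> x0"] per_int[of \<psi>, OF per, of x0 j] by auto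
  qed
  have "B \<ge> 0" using B[of "\<psi> 0"] by auto
  show ?thesis
  proof (rule that[of "B + 1"])
    show "B + 1 > 0" using \<open>B \<ge> 0\<close> by simp
    fix x show "\<bar>\<psi> x\<bar> \<le> B + 1" using bnd[of x] by simp
  qed
qed

lemma abs_sin_shift: "\<bar>sin (z + real_of_int j * pi)\<bar> = \<bar>sin z\<bar>"
proof -
  have s: "sin (real_of_int j * pi) = 0" using sin_times_pi_eq_0[of "real_of_int j"] by simp
  then have c: "\<bar>cos (real_of_int j * pi)\<bar> = 1"
    using sin_cos_squared_add[of "real_of_int j * pi"] by (simp add: abs_square_eq_1)
  show ?thesis by (simp add: sin_add s abs_mult c)
qed

lemma psi_uc:
  fixes \<psi> :: "real \<Rightarrow> real"
  assumes cont: "continuous_on UNIV \<psi>" and per: "\<And>x. \<psi> (x + 2 * pi) = \<psi> x"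
    and e: "e > 0"
  obtains \<eta> where "\<eta> > 0" "\<And>x s. \<bar>sin ((x - s) / 2)\<bar> < \<eta> \<Longrightarrow> \<bar>\<psi> x - \<psi> s\<bar> < e"
proof -
  have "uniformly_continuous_on {-2*pi..4*pi} \<psi>"
    by (intro compact_uniformly_continuous continuous_on_subset[OF cont]) auto
  then obtain d where d: "d > 0" "\<And>x x'. x \<in> {-2*pi..4*pi} \<Longrightarrow> x' \<in> {-2*pi..4*pi} \<Longrightarrow>
      dist x' x < d \<Longrightarrow> dist (\<psi> x') (\<psi> x) < e"
    unfolding uniformly_continuous_on_def using e by metis
  define d' where "d' = min d pi"
  have d': "d' > 0" "d' \<le> d" "d' \<le> pi" using d(1) by (auto simp: d'_def)
  define \<eta> where "\<eta> = sin (d' / 2)"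
  have "\<eta> > 0" unfolding \<eta>_def using d' by (intro sin_gt_zero) auto
  moreover have "\<bar>\<psi> x - \<psi> s\<bar> < e" if h: "\<bar>sin ((x - s) / 2)\<bar> < \<eta>" for x s
  proof -
    define y where "y = (x - s) / 2"
    define j where "j = \<lfloor>y / pi + 1/2\<rfloor>"
    define z where "z = y - real_of_int j * pi"
    have "real_of_int j \<le> y / pi + 1/2" "y / pi + 1/2 < real_of_int j + 1"
      unfolding j_def by linarith+
    then have "real_of_int j * pi \<le> y + pi/2" "y + pi/2 < real_of_int j * pi + pi"
      by (simp_all add: field_simps)
    then have zb: "- (pi/2) \<le> z" "z \<le> pi/2" unfolding z_def by auto
    have "\<bar>sin z\<bar> = \<bar>sin y\<bar>" using abs_sin_shift[of z j] by (simp add: z_def)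
    then have sz: "\<bar>sin z\<bar> < sin (d'/2)" using h by (simp add: y_def \<eta>_def)
    have zsmall: "\<bar>z\<bar> < d'/2"
    proof (rule ccontr)
      assume "\<not> \<bar>z\<bar> < d'/2"
      then have zz: "d'/2 \<le> \<bar>z\<bar>" by simp
      have "sin (d'/2) \<le> sin \<bar>z\<bar>"
        using zz zb d' by (subst sin_mono_le_eq) auto
      also have "sin \<bar>z\<bar> = \<bar>sin z\<bar>"
      proof (cases "z \<ge> 0")
        case True then show ?thesis using zb by (simp add: sin_ge_zero)
      next
        case False
        have "sin (- z) \<ge> 0" using zb False by (intro sin_ge_zero) auto
        then show ?thesis using False by simp
      qed
      finally show False using sz by simp
    qed
    obtain s0 j1 where s0: "s0 \<in> {0..2*pi}" "s = s0 + 2 * pi * real_of_int j1" by (rule reduce_2pi)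
    define x0 where "x0 = s0 + 2 * z"
    have x_eq: "x = x0 + 2 * pi * real_of_int (j + j1)"
      unfolding x0_def z_def y_def using s0(2) by (simp add: field_simps)
    have "\<psi> x = \<psi> x0" using per_int[of \<psi>, OF per, of x0 "j + j1"] x_eq by simp
    moreover have "\<psi> s = \<psi> s0" using per_int[of \<psi>, OF per, of s0 j1] s0 by simp
    moreover have "dist (\<psi> x0) (\<psi> s0) < e"
    proof (rule d(2))
      show "s0 \<in> {-2*pi..4*pi}" using s0 by auto
      show "x0 \<in> {-2*pi..4*pi}" using s0 zsmall d' by (auto simp: x0_def)
      show "dist x0 s0 < d" using zsmall d' by (simp add: x0_def dist_real_def)
    qed
    ultimately show ?thesis by (simp add: dist_real_def)
  qed
  ultimately show ?thesis using that by blast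
qed




lemma (in prob_space) cg_facts:
  assumes "centered_gaussian_rv M X"
  shows "integrable M (\<lambda>\<omega>. (X \<omega>)^2)" "integrable M X" "expectation X = 0"
proof -
  have X: "X \<in> borel_measurable M" using assms by (simp add: centered_gaussian_rv_def)
  have "(integrable M (\<lambda>\<omega>. (X \<omega>)^2) \<and> integrable M X) \<and> expectation X = 0"
  proof (cases "AE \<omega> in M. X \<omega> = 0")
    case True
    have i1: "integrable M (\<lambda>\<omega>. (X \<omega>)^2) \<longleftrightarrow> integrable M (\<lambda>\<omega>. 0::real)"
      using True X by (intro integrable_cong_AE) auto
    have i2: "integrable M X \<longleftrightarrow> integrable M (\<lambda>\<omega>. 0::real)"
      using True X by (intro integrable_cong_AE) auto
    have e: "expectation X = expectation (\<lambda>\<omega>. 0::real)"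
      using True X by (intro integral_cong_AE) auto
    show ?thesis using i1 i2 e by simp
  next
    case False
    then obtain \<sigma> where \<sigma>: "\<sigma> > 0" and D: "distributed M lborel X (normal_density 0 \<sigma>)"
      using assms by (auto simp: centered_gaussian_rv_def)
    have "integrable lborel (\<lambda>x. normal_density 0 \<sigma> x * x^2)"
      using integrable_normal_moment[OF \<sigma>, of 0 2] by simp
    then have i1: "integrable M (\<lambda>\<omega>. (X \<omega>)^2)"
      using distributed_integrable[OF D, of "\<lambda>x. x^2"] by (simp add: normal_density_nonneg)
    have "integrable lborel (\<lambda>x. normal_density 0 \<sigma> x * x)"
      using integrable_normal_moment[OF \<sigma>, of 0 1] by simp
    then have i2: "integrable M X"
      using distributed_integrable[OF D, of "\<lambda>x. x"] by (simp add: normal_density_nonneg)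
    show ?thesis using i1 i2 normal_distributed_expectation[OF \<sigma> D] by simp
  qed
  then show "integrable M (\<lambda>\<omega>. (X \<omega>)^2)" "integrable M X" "expectation X = 0" by auto
qed

lemma (in prob_space) int_prod:
  fixes X Y :: "'a \<Rightarrow> real"
  assumes "integrable M (\<lambda>\<omega>. (X \<omega>)^2)" "integrable M (\<lambda>\<omega>. (Y \<omega>)^2)"
    "X \<in> borel_measurable M" "Y \<in> borel_measurable M"
  shows "integrable M (\<lambda>\<omega>. X \<omega> * Y \<omega>)"
proof (rule Bochner_Integration.integrable_bound[where f="\<lambda>\<omega>. (X \<omega>)^2 + (Y \<omega>)^2"])
  show "integrable M (\<lambda>\<omega>. (X \<omega>)^2 + (Y \<omega>)^2)" using assms by auto
  show "(\<lambda>\<omega>. X \<omega> * Y \<omega>) \<in> borel_measurable M" using assms by measurable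
  show "AE \<omega> in M. norm (X \<omega> * Y \<omega>) \<le> norm ((X \<omega>)^2 + (Y \<omega>)^2)"
  proof (rule AE_I2)
    fix \<omega>
    have "0 \<le> (\<bar>X \<omega>\<bar> - \<bar>Y \<omega>\<bar>)^2" by simp
    then have h: "2 * (\<bar>X \<omega>\<bar> * \<bar>Y \<omega>\<bar>) \<le> \<bar>X \<omega>\<bar>^2 + \<bar>Y \<omega>\<bar>^2"
      unfolding power2_diff by linarith
    have "0 \<le> \<bar>X \<omega>\<bar> * \<bar>Y \<omega>\<bar>" by simp
    moreover have "2 * (\<bar>X \<omega>\<bar> * \<bar>Y \<omega>\<bar>) \<le> (X \<omega>)^2 + (Y \<omega>)^2" using h by simp
    ultimately have "\<bar>X \<omega>\<bar> * \<bar>Y \<omega>\<bar> \<le> (X \<omega>)^2 + (Y \<omega>)^2" by linarith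
    then show "norm (X \<omega> * Y \<omega>) \<le> norm ((X \<omega>)^2 + (Y \<omega>)^2)"
      by (simp add: abs_mult)
  qed
qed

lemma rn_formula:
  fixes M :: "'w measure" and a b :: "nat \<Rightarrow> 'w \<Rightarrow> real" and \<rho> :: "int \<Rightarrow> real"
  assumes P: "prob_space M"
    and ga: "centered_gaussian_seq M a"
    and gb: "centered_gaussian_seq M b"
    and ind: "prob_space.indep_var M (Pi\<^sub>M {1..} (\<lambda>_. borel)) (\<lambda>\<omega>. \<lambda>k\<in>{1..}. a k \<omega>)
                                (Pi\<^sub>M {1..} (\<lambda>_. borel)) (\<lambda>\<omega>. \<lambda>k\<in>{1..}. b k \<omega>)"
    and ca: "\<And>k l. k \<ge> 1 \<Longrightarrow> l \<ge> 1 \<Longrightarrow>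
           prob_space.expectation M (\<lambda>\<omega>. a k \<omega> * a l \<omega>) = \<rho> (int k - int l)"
    and cb: "\<And>k l. k \<ge> 1 \<Longrightarrow> l \<ge> 1 \<Longrightarrow>
           prob_space.expectation M (\<lambda>\<omega>. b k \<omega> * b l \<omega>) = \<rho> (int k - int l)"
  shows "rn M a b n s t = (1 / real n) * (\<Sum>k=1..n. \<Sum>l=1..n. \<rho> (int k - int l) * cos (real k * s - real l * t))"
proof -
  interpret prob_space M by (rule P)
  have cg1: "centered_gaussian_rv M (c k)" if g: "centered_gaussian_seq M c" and k: "k \<ge> 1" for c k
  proof -
    have "finite {k} \<longrightarrow> {k} \<subseteq> {1..} \<longrightarrow> centered_gaussian_rv M (\<lambda>\<omega>. \<Sum>j\<in>{k}. (\<lambda>_. 1::real) j * c j \<omega>)"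
      using spec[OF spec[OF g[unfolded centered_gaussian_seq_def], of "{k}"], of "\<lambda>_. 1"] by simp
    then show ?thesis using k by simp
  qed
  have fa: "integrable M (\<lambda>\<omega>. (a k \<omega>)^2)" "integrable M (a k)" "expectation (a k) = 0"
     "a k \<in> borel_measurable M" if "k \<ge> 1" for k
    using cg_facts[OF cg1[OF ga that]] cg1[OF ga that] by (auto simp: centered_gaussian_rv_def)
  have fb: "integrable M (\<lambda>\<omega>. (b k \<omega>)^2)" "integrable M (b k)" "expectation (b k) = 0"
     "b k \<in> borel_measurable M" if "k \<ge> 1" for k
    using cg_facts[OF cg1[OF gb that]] cg1[OF gb that] by (auto simp: centered_gaussian_rv_def)
  have iab: "indep_var borel (a k) borel (b l)" if "k \<ge> 1" "l \<ge> 1" for k l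
  proof -
    have "indep_var borel ((\<lambda>f. f k) \<circ> (\<lambda>\<omega>. \<lambda>k\<in>{1..}. a k \<omega>)) borel ((\<lambda>f. f l) \<circ> (\<lambda>\<omega>. \<lambda>k\<in>{1..}. b k \<omega>))"
      by (rule indep_var_compose[OF ind]) (use that in auto)
    moreover have "(\<lambda>f. f k) \<circ> (\<lambda>\<omega>. \<lambda>k\<in>{1..}. a k \<omega>) = a k" "(\<lambda>f. f l) \<circ> (\<lambda>\<omega>. \<lambda>k\<in>{1..}. b k \<omega>) = b l"
      using that by (auto simp: fun_eq_iff)
    ultimately show ?thesis by simp
  qed
  have Eab: "has_bochner_integral M (\<lambda>\<omega>. a k \<omega> * b l \<omega>) 0" if "k \<ge> 1" "l \<ge> 1" for k l
  proof -
    have "expectation (\<lambda>\<omega>. a k \<omega> * b l \<omega>) = 0"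
      using indep_var_lebesgue_integral[OF iab[OF that] fa(2)[OF that(1)] fb(2)[OF that(2)]] fa(3)[OF that(1)] by simp
    moreover have "integrable M (\<lambda>\<omega>. a k \<omega> * b l \<omega>)"
      using int_prod[OF fa(1)[OF that(1)] fb(1)[OF that(2)] fa(4)[OF that(1)] fb(4)[OF that(2)]] .
    ultimately show ?thesis by (metis has_bochner_integral_integrable)
  qed
  have Eba: "has_bochner_integral M (\<lambda>\<omega>. b k \<omega> * a l \<omega>) 0" if "k \<ge> 1" "l \<ge> 1" for k l
    using Eab[OF that(2) that(1)] by (simp add: mult.commute)
  have Eaa: "has_bochner_integral M (\<lambda>\<omega>. a k \<omega> * a l \<omega>) (\<rho> (int k - int l))" if "k \<ge> 1" "l \<ge> 1" for k l
    using int_prod[OF fa(1)[OF that(1)] fa(1)[OF that(2)] fa(4)[OF that(1)] fa(4)[OF that(2)]] ca[OF that]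
    by (metis has_bochner_integral_integrable)
  have Ebb: "has_bochner_integral M (\<lambda>\<omega>. b k \<omega> * b l \<omega>) (\<rho> (int k - int l))" if "k \<ge> 1" "l \<ge> 1" for k l
    using int_prod[OF fb(1)[OF that(1)] fb(1)[OF that(2)] fb(4)[OF that(1)] fb(4)[OF that(2)]] cb[OF that]
    by (metis has_bochner_integral_integrable)
  have expand: "Xn a b n s \<omega> * Xn a b n t \<omega> = (1 / real n) * (\<Sum>k=1..n. \<Sum>l=1..n.
      (a k \<omega> * a l \<omega> * (cos (real k * s) * cos (real l * t)) + a k \<omega> * b l \<omega> * (cos (real k * s) * sin (real l * t)))
      + (b k \<omega> * a l \<omega> * (sin (real k * s) * cos (real l * t)) + b k \<omega> * b l \<omega> * (sin (real k * s) * sin (real l * t))))" for \<omega>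
  proof -
    have h: "(1 / sqrt (real n)) * (1 / sqrt (real n)) = 1 / real n" by (simp add: real_sqrt_mult[symmetric])
    have "Xn a b n s \<omega> * Xn a b n t \<omega> = ((1 / sqrt (real n)) * (1 / sqrt (real n))) *
      ((\<Sum>k=1..n. a k \<omega> * cos (real k * s) + b k \<omega> * sin (real k * s)) *
       (\<Sum>l=1..n. a l \<omega> * cos (real l * t) + b l \<omega> * sin (real l * t)))"
      unfolding Xn_def by (simp only: ac_simps)
    also have "\<dots> = (1 / real n) * (\<Sum>k=1..n. \<Sum>l=1..n.
       (a k \<omega> * cos (real k * s) + b k \<omega> * sin (real k * s)) * (a l \<omega> * cos (real l * t) + b l \<omega> * sin (real l * t)))"
      unfolding h sum_product ..
    finally show ?thesis by (simp only: algebra_simps)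
  qed
  have "has_bochner_integral M (\<lambda>\<omega>. Xn a b n s \<omega> * Xn a b n t \<omega>)
     ((1 / real n) * (\<Sum>k=1..n. \<Sum>l=1..n.
      (\<rho> (int k - int l) * (cos (real k * s) * cos (real l * t)) + 0 * (cos (real k * s) * sin (real l * t)))
      + (0 * (sin (real k * s) * cos (real l * t)) + \<rho> (int k - int l) * (sin (real k * s) * sin (real l * t)))))"
    unfolding expand
    by (intro has_bochner_integral_mult_right has_bochner_integral_sum has_bochner_integral_add
        has_bochner_integral_mult_left Eaa Eab Eba Ebb) auto
  then have "rn M a b n s t = (1 / real n) * (\<Sum>k=1..n. \<Sum>l=1..n.
      (\<rho> (int k - int l) * (cos (real k * s) * cos (real l * t)) + 0 * (cos (real k * s) * sin (real l * t)))
      + (0 * (sin (real k * s) * cos (real l * t)) + \<rho> (int k - int l) * (sin (real k * s) * sin (real l * t))))"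
    unfolding rn_def by (rule has_bochner_integral_integral_eq)
  also have "\<dots> = (1 / real n) * (\<Sum>k=1..n. \<Sum>l=1..n. \<rho> (int k - int l) * cos (real k * s - real l * t))"
    by (simp add: cos_diff algebra_simps)
  finally show ?thesis .
qed




lemma Acx_bound: "\<bar>sin (\<alpha>/2)\<bar> * cmod (Acx p n \<alpha>) \<le> 1"
proof -
  define w where "w k = (if k = 0 then 0 else wt p n k)" for k
  have w0: "w 0 = 0" by (simp add: w_def)
  have mono: "mono w"
  proof (rule monoI)
    fix k k' :: nat assume "k \<le> k'"
    then show "w k \<le> w k'"
      by (auto simp: w_def wt_def intro!: power_mono divide_right_mono)
  qed
  have wn: "w n \<le> 1" by (cases "n = 0") (auto simp: w_def wt_def)
  have "Acx p n \<alpha> = (\<Sum>k=1..n. of_real (w k) * (cis \<alpha>)^k)"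
  proof -
    have dm: "cis \<alpha> ^ k = cis (real k * \<alpha>)" for k by (rule Complex.DeMoivre)
    show ?thesis unfolding Acx_def dm by (intro sum.cong refl) (simp add: w_def)
  qed
  then have "2 * \<bar>sin (\<alpha>/2)\<bar> * cmod (Acx p n \<alpha>) \<le> 2 * w n"
    using abel_bound[of w "cis \<alpha>" n, OF w0 mono] by (simp add: cmod_cis_minus_1)
  then show ?thesis using wn by simp
qed

lemma wt_le1: "k \<le> n \<Longrightarrow> wt p n k \<le> 1"
  by (auto simp: wt_def divide_le_eq_1 intro!: power_le_one)

lemma wt_ge0: "wt p n k \<ge> 0" by (simp add: wt_def)

definition Gs :: "(int \<Rightarrow> real) \<Rightarrow> nat \<Rightarrow> nat \<Rightarrow> nat \<Rightarrow> real \<Rightarrow> real \<Rightarrow> real \<Rightarrow> real" where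
  "Gs \<rho> p q n \<theta> S T = (\<Sum>k=1..n. \<Sum>l=1..n. \<rho> (int k - int l) * (wt p n k * wt q n l) *
      cos (real k * S - real l * T + \<theta>))"

lemma rho_rep_cos:
  assumes rc: "\<And>j. ((\<lambda>x. \<psi> x * cos (of_int j * x)) has_integral (2*pi*\<rho> j)) {0..2*pi}"
    and rs: "\<And>j. ((\<lambda>x. \<psi> x * sin (of_int j * x)) has_integral 0) {0..2*pi}"
  shows "((\<lambda>x. \<psi> x * cos (B - of_int j * x)) has_integral (2*pi*\<rho> j * cos B)) {0..2*pi}"
proof -
  have "((\<lambda>x. cos B * (\<psi> x * cos (of_int j * x)) + sin B * (\<psi> x * sin (of_int j * x))) has_integral
      (cos B * (2*pi*\<rho> j) + sin B * 0)) {0..2*pi}"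
    by (intro has_integral_add has_integral_mult_right rc rs)
  then show ?thesis by (simp add: cos_diff algebra_simps)
qed

lemma Gs_rep:
  assumes rc: "\<And>j. ((\<lambda>x. \<psi> x * cos (of_int j * x)) has_integral (2*pi*\<rho> j)) {0..2*pi}"
    and rs: "\<And>j. ((\<lambda>x. \<psi> x * sin (of_int j * x)) has_integral 0) {0..2*pi}"
  shows "((\<lambda>x. \<psi> x * Hs p q n \<theta> (S - x) (T - x)) has_integral (2*pi * Gs \<rho> p q n \<theta> S T)) {0..2*pi}"
proof -
  have "((\<lambda>x. \<Sum>k=1..n. \<Sum>l=1..n. (wt p n k * wt q n l) *
        (\<psi> x * cos ((real k * S - real l * T + \<theta>) - of_int (int k - int l) * x))) has_integral
      (\<Sum>k=1..n. \<Sum>l=1..n. (wt p n k * wt q n l) * (2*pi*\<rho> (int k - int l) * cos (real k * S - real l * T + \<theta>)))) {0..2*pi}"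
    by (intro has_integral_sum finite_atLeastAtMost ballI has_integral_mult_right rho_rep_cos[OF rc rs])
  moreover have "(\<lambda>x. \<Sum>k=1..n. \<Sum>l=1..n. (wt p n k * wt q n l) *
        (\<psi> x * cos ((real k * S - real l * T + \<theta>) - of_int (int k - int l) * x))) =
      (\<lambda>x. \<psi> x * Hs p q n \<theta> (S - x) (T - x))"
    unfolding Hs_def sum_distrib_left
    by (intro ext sum.cong refl) (simp add: algebra_simps)
  moreover have "(\<Sum>k=1..n. \<Sum>l=1..n. (wt p n k * wt q n l) * (2*pi*\<rho> (int k - int l) * cos (real k * S - real l * T + \<theta>)))
      = 2*pi * Gs \<rho> p q n \<theta> S T"
    unfolding Gs_def sum_distrib_left by (intro sum.cong refl) (simp add: algebra_simps)
  ultimately show ?thesis by simp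
qed




lemma sum_wt_sq: "(\<Sum>k=1..n. wt p n k * wt p n k) \<le> real n"
proof -
  have "(\<Sum>k=1..n. wt p n k * wt p n k) \<le> (\<Sum>k=1..n. 1)"
    by (intro sum_mono) (auto intro!: mult_le_one wt_le1 wt_ge0)
  then show ?thesis by simp
qed

lemma Acx_far:
  assumes "\<bar>sin (\<alpha>/2)\<bar> \<ge> \<eta> / 2" "\<eta> > 0"
  shows "cmod (Acx p n \<alpha>) \<le> 2 / \<eta>"
proof -
  have pos: "\<bar>sin (\<alpha>/2)\<bar> > 0" using assms by linarith
  have "\<bar>sin (\<alpha>/2)\<bar> * cmod (Acx p n \<alpha>) \<le> 1" by (rule Acx_bound)
  then have "cmod (Acx p n \<alpha>) \<le> 1 / \<bar>sin (\<alpha>/2)\<bar>" using pos by (simp add: field_simps)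
  also have "\<dots> \<le> 1 / (\<eta> / 2)" using assms pos by (intro divide_left_mono) auto
  finally show ?thesis by simp
qed

lemma main_est:
  fixes \<psi> :: "real \<Rightarrow> real"
  assumes rc: "\<And>j. ((\<lambda>x. \<psi> x * cos (of_int j * x)) has_integral (2*pi*\<rho> j)) {0..2*pi}"
    and rs: "\<And>j. ((\<lambda>x. \<psi> x * sin (of_int j * x)) has_integral 0) {0..2*pi}"
    and Bb: "\<And>x. \<bar>\<psi> x\<bar> \<le> B"
    and eta: "\<eta> > 0" and uc: "\<And>x s. \<bar>sin ((x - s) / 2)\<bar> < \<eta> \<Longrightarrow> \<bar>\<psi> x - \<psi> s\<bar> < \<epsilon>"
    and eps: "\<epsilon> > 0" and n: "n > 0"
    and Sc: "\<bar>S - s\<bar> \<le> \<eta>" and Tc: "\<bar>T - s\<bar> \<le> \<eta>"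
  shows "\<bar>Gs \<rho> p q n \<theta> S T / real n - \<psi> s * (\<Sum>k=1..n. wt p n k * wt q n k * cos (real k * S - real k * T + \<theta>)) / real n\<bar>
     \<le> \<epsilon> + 8 * B / (\<eta>^2 * real n)"
proof -
  define E where "E = (\<Sum>k=1..n. wt p n k * wt q n k * cos (real k * S - real k * T + \<theta>))"
  define H where "H x = Hs p q n \<theta> (S - x) (T - x)" for x
  define Ap where "Ap x = cmod (Acx p n (S - x))" for x
  define Aq where "Aq x = cmod (Acx q n (T - x))" for x
  define P where "P = (\<Sum>k=1..n. wt p n k * wt p n k)"
  define Q where "Q = (\<Sum>k=1..n. wt q n k * wt q n k)"
  have B0: "B \<ge> 0" using Bb[of 0] by linarith
  have I1: "((\<lambda>x. \<psi> x * H x) has_integral (2*pi * Gs \<rho> p q n \<theta> S T)) {0..2*pi}"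
    unfolding H_def by (rule Gs_rep[OF rc rs])
  have I2: "((\<lambda>x. \<psi> s * H x) has_integral (\<psi> s * (2*pi*E))) {0..2*pi}"
    unfolding H_def E_def by (intro has_integral_mult_right Hs_integral)
  have ID: "((\<lambda>x. (\<psi> x - \<psi> s) * H x) has_integral (2*pi * Gs \<rho> p q n \<theta> S T - \<psi> s * (2*pi*E))) {0..2*pi}"
    using has_integral_diff[OF I1 I2] by (simp add: algebra_simps)
  have IP: "((\<lambda>x. (Ap x)^2) has_integral (2*pi*P)) {0..2*pi}"
    using Hs_integral[of p p n 0 S S] unfolding Ap_def P_def Hs_sq by simp
  have IQ: "((\<lambda>x. (Aq x)^2) has_integral (2*pi*Q)) {0..2*pi}"
    using Hs_integral[of q q n 0 T T] unfolding Aq_def Q_def Hs_sq by simp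
  define g where "g x = \<epsilon> * ((Ap x)^2 + (Aq x)^2) / 2 + 8 * B / \<eta>^2" for x
  have Ig: "(g has_integral (\<epsilon> * (2*pi*P + 2*pi*Q) / 2 + 8 * B / \<eta>^2 * (2*pi))) {0..2*pi}"
  proof -
    have c: "((\<lambda>x. 8 * B / \<eta>^2) has_integral (8 * B / \<eta>^2 * (2*pi))) {0..2*pi}"
      using has_integral_const_real[of "8 * B / \<eta>^2" 0 "2*pi"] by (simp add: mult.commute)
    have "((\<lambda>x. \<epsilon> * ((Ap x)^2 + (Aq x)^2) / 2 + 8 * B / \<eta>^2) has_integral
        (\<epsilon> * (2*pi*P + 2*pi*Q) / 2 + 8 * B / \<eta>^2 * (2*pi))) {0..2*pi}"
      by (intro has_integral_add has_integral_divide has_integral_mult_right IP IQ c)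
    then show ?thesis unfolding g_def[abs_def] .
  qed
  have pw: "\<bar>(\<psi> x - \<psi> s) * H x\<bar> \<le> g x" for x
  proof -
    have Hb: "\<bar>H x\<bar> \<le> Ap x * Aq x" unfolding H_def Ap_def Aq_def by (rule Hs_bound)
    have Ap0: "Ap x \<ge> 0" "Aq x \<ge> 0" by (simp_all add: Ap_def Aq_def)
    have amgm: "Ap x * Aq x \<le> ((Ap x)^2 + (Aq x)^2) / 2"
    proof -
      have "0 \<le> (Ap x - Aq x)^2" by simp
      then show ?thesis unfolding power2_diff mult.assoc by (simp add: field_simps)
    qed
    show ?thesis
    proof (cases "\<bar>sin ((x - s) / 2)\<bar> < \<eta>")
      case True
      have "\<bar>(\<psi> x - \<psi> s) * H x\<bar> = \<bar>\<psi> x - \<psi> s\<bar> * \<bar>H x\<bar>" by (simp add: abs_mult)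
      also have "\<dots> \<le> \<epsilon> * (((Ap x)^2 + (Aq x)^2) / 2)"
        using uc[OF True] Hb amgm by (intro mult_mono) auto
      also have "\<dots> \<le> g x" using B0 by (simp add: g_def)
      finally show ?thesis .
    next
      case False
      have sx: "\<bar>sin ((s - x) / 2)\<bar> \<ge> \<eta>"
      proof -
        have "sin ((s - x) / 2) = - sin ((x - s) / 2)" by (simp add: sin_minus[symmetric] minus_divide_left)
        then show ?thesis using False by simp
      qed
      have farS: "\<bar>sin ((S - x) / 2)\<bar> \<ge> \<eta> / 2"
      proof -
        have "\<bar>sin ((S - x) / 2) - sin ((s - x) / 2)\<bar> \<le> \<bar>(S - x) / 2 - (s - x) / 2\<bar>" by (rule abs_sin_diff)
        also have "\<dots> = \<bar>S - s\<bar> / 2" by (simp add: field_simps)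
        finally have d: "\<bar>sin ((S - x) / 2) - sin ((s - x) / 2)\<bar> \<le> \<bar>S - s\<bar> / 2" .
        have "\<bar>sin ((s - x) / 2)\<bar> - \<bar>sin ((S - x) / 2)\<bar> \<le> \<bar>sin ((s - x) / 2) - sin ((S - x) / 2)\<bar>"
          by (rule abs_triangle_ineq2)
        then show ?thesis using d sx Sc by (simp add: abs_minus_commute)
      qed
      have farT: "\<bar>sin ((T - x) / 2)\<bar> \<ge> \<eta> / 2"
      proof -
        have "\<bar>sin ((T - x) / 2) - sin ((s - x) / 2)\<bar> \<le> \<bar>(T - x) / 2 - (s - x) / 2\<bar>" by (rule abs_sin_diff)
        also have "\<dots> = \<bar>T - s\<bar> / 2" by (simp add: field_simps)
        finally have d: "\<bar>sin ((T - x) / 2) - sin ((s - x) / 2)\<bar> \<le> \<bar>T - s\<bar> / 2" .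
        have "\<bar>sin ((s - x) / 2)\<bar> - \<bar>sin ((T - x) / 2)\<bar> \<le> \<bar>sin ((s - x) / 2) - sin ((T - x) / 2)\<bar>"
          by (rule abs_triangle_ineq2)
        then show ?thesis using d sx Tc by (simp add: abs_minus_commute)
      qed
      have a1: "Ap x \<le> 2 / \<eta>" unfolding Ap_def by (rule Acx_far[OF farS eta])
      have a2: "Aq x \<le> 2 / \<eta>" unfolding Aq_def by (rule Acx_far[OF farT eta])
      have psd: "\<bar>\<psi> x - \<psi> s\<bar> \<le> 2 * B" using Bb[of x] Bb[of s] by linarith
      have "\<bar>(\<psi> x - \<psi> s) * H x\<bar> = \<bar>\<psi> x - \<psi> s\<bar> * \<bar>H x\<bar>" by (simp add: abs_mult)
      also have "\<dots> \<le> (2 * B) * ((2 / \<eta>) * (2 / \<eta>))"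
      proof -
        have "Ap x * Aq x \<le> (2 / \<eta>) * (2 / \<eta>)" by (rule mult_mono[OF a1 a2]) (use Ap0 eta in auto)
        then have "\<bar>H x\<bar> \<le> (2 / \<eta>) * (2 / \<eta>)" using Hb by linarith
        then show ?thesis by (rule mult_mono[OF psd]) (use B0 in auto)
      qed
      also have "\<dots> = 8 * B / \<eta>^2" by (simp add: power2_eq_square)
      also have "\<dots> \<le> g x" using eps by (simp add: g_def)
      finally show ?thesis .
    qed
  qed
  have up: "2*pi * Gs \<rho> p q n \<theta> S T - \<psi> s * (2*pi*E) \<le> \<epsilon> * (2*pi*P + 2*pi*Q) / 2 + 8 * B / \<eta>^2 * (2*pi)"
    by (rule has_integral_le[OF ID Ig]) (use pw in \<open>auto simp: abs_le_iff\<close>)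
  have lo: "- (2*pi * Gs \<rho> p q n \<theta> S T - \<psi> s * (2*pi*E)) \<le> \<epsilon> * (2*pi*P + 2*pi*Q) / 2 + 8 * B / \<eta>^2 * (2*pi)"
    by (rule has_integral_le[OF has_integral_neg[OF ID] Ig]) (use pw in \<open>auto simp: abs_le_iff\<close>)
  have PQ: "P \<le> real n" "Q \<le> real n" unfolding P_def Q_def by (rule sum_wt_sq)+
  have "\<epsilon> * (2*pi*P + 2*pi*Q) / 2 \<le> \<epsilon> * (2*pi*real n + 2*pi*real n) / 2"
    using PQ eps by (intro divide_right_mono mult_left_mono add_mono) auto
  moreover have "\<epsilon> * (2*pi*real n + 2*pi*real n) / 2 + 8 * B / \<eta>^2 * (2*pi) = 2*pi * (\<epsilon> * real n + 8 * B / \<eta>^2)"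
    by (simp add: algebra_simps)
  moreover have "2*pi * Gs \<rho> p q n \<theta> S T - \<psi> s * (2*pi*E) = 2*pi * (Gs \<rho> p q n \<theta> S T - \<psi> s * E)"
    by (simp add: algebra_simps)
  ultimately have "\<bar>2*pi * (Gs \<rho> p q n \<theta> S T - \<psi> s * E)\<bar> \<le> 2*pi * (\<epsilon> * real n + 8 * B / \<eta>^2)"
    using up lo unfolding abs_le_iff by linarith
  then have "\<bar>Gs \<rho> p q n \<theta> S T - \<psi> s * E\<bar> \<le> \<epsilon> * real n + 8 * B / \<eta>^2"
    by (simp add: abs_mult)
  then have "\<bar>Gs \<rho> p q n \<theta> S T - \<psi> s * E\<bar> / real n \<le> (\<epsilon> * real n + 8 * B / \<eta>^2) / real n"
    using n by (intro divide_right_mono) auto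
  then show ?thesis using n unfolding E_def[symmetric]
    by (simp add: diff_divide_distrib[symmetric] add_divide_distrib)
qed




lemma rep_facts:
  fixes \<psi> :: "real \<Rightarrow> real" and \<rho> :: "int \<Rightarrow> real"
  assumes cont: "continuous_on UNIV \<psi>"
    and rep: "\<And>k. complex_of_real (\<rho> k) =
           integral {0..2*pi} (\<lambda>u. exp (- \<i> * of_int k * of_real u) * of_real (\<psi> u)) / (2 * pi)"
  shows "((\<lambda>x. \<psi> x * cos (of_int j * x)) has_integral (2*pi*\<rho> j)) {0..2*pi}"
    and "((\<lambda>x. \<psi> x * sin (of_int j * x)) has_integral 0) {0..2*pi}"
proof -
  define F where "F u = exp (- \<i> * of_int j * of_real u) * of_real (\<psi> u)" for u
  have e: "exp (- \<i> * of_int j * of_real u) = cis (- (of_int j * u))" for u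
    by (simp add: cis_conv_exp mult.assoc)
  have Fe: "F u = cis (- (of_int j * u)) * of_real (\<psi> u)" for u unfolding F_def e ..
  have "continuous_on {0..2*pi} F"
    unfolding Fe[abs_def] by (intro continuous_intros continuous_on_subset[OF cont]) auto
  then have "(F has_integral integral {0..2*pi} F) {0..2*pi}"
    by (intro integrable_integral integrable_continuous_interval)
  moreover have "integral {0..2*pi} F = of_real (2*pi*\<rho> j)"
    using rep[of j] unfolding F_def[symmetric] by simp
  ultimately have I: "(F has_integral of_real (2*pi*\<rho> j)) {0..2*pi}" by simp
  have "((\<lambda>x. Re (F x)) has_integral Re (of_real (2*pi*\<rho> j))) {0..2*pi}" by (rule has_integral_Re[OF I])
  then show "((\<lambda>x. \<psi> x * cos (of_int j * x)) has_integral (2*pi*\<rho> j)) {0..2*pi}"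
    by (simp add: Fe mult.commute)
  have "((\<lambda>x. Im (F x)) has_integral Im (of_real (2*pi*\<rho> j))) {0..2*pi}" by (rule has_integral_Im[OF I])
  then have "((\<lambda>x. - (\<psi> x * sin (of_int j * x))) has_integral 0) {0..2*pi}"
    by (simp add: Fe mult.commute)
  from has_integral_neg[OF this] show "((\<lambda>x. \<psi> x * sin (of_int j * x)) has_integral 0) {0..2*pi}"
    by simp
qed




lemma ring_helper:
  fixes R n L K C N s :: real
  shows "R / n * (s * L) * K * C / N = s * (R * (K * L / N) * C) / n"
  by (simp add: divide_inverse ac_simps)

lemma pderiv_formula:
  fixes F :: "real \<Rightarrow> real \<Rightarrow> real"
  assumes F: "\<And>s t. F s t = (1 / real n) * (\<Sum>k=1..n. \<Sum>l=1..n. \<rho> (int k - int l) * cos (real k * s - real l * t))"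
    and n: "n > 0"
  shows "pderiv2 p q F S T / real n ^ (p + q) = (-1)^q * Gs \<rho> p q n (real (p + q) * pi / 2) S T / real n"
proof -
  define I where "I = {1..n} \<times> {1..n}"
  have fin: "finite I" by (simp add: I_def)
  define c where "c i = \<rho> (int (fst i) - int (snd i)) / real n" for i :: "nat \<times> nat"
  define \<alpha> where "\<alpha> i = - real (snd i)" for i :: "nat \<times> nat"
  define \<beta> where "\<beta> x i = real (fst i) * x" for x and i :: "nat \<times> nat"
  have inner: "(\<lambda>y. F x y) = (\<lambda>y. \<Sum>i\<in>I. c i * cos (\<alpha> i * y + \<beta> x i))" for x
  proof
    fix y
    have "F x y = (\<Sum>k=1..n. \<Sum>l=1..n. \<rho> (int k - int l) / real n * cos (real k * x - real l * y))"
      unfolding F sum_distrib_left by (intro sum.cong refl) (simp add: field_simps)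
    also have "\<dots> = (\<Sum>i\<in>I. c i * cos (\<alpha> i * y + \<beta> x i))"
      unfolding I_def sum.cartesian_product c_def \<alpha>_def \<beta>_def
      by (intro sum.cong refl) (auto simp: algebra_simps)
    finally show "F x y = (\<Sum>i\<in>I. c i * cos (\<alpha> i * y + \<beta> x i))" .
  qed
  define c' where "c' i = c i * \<alpha> i ^ q" for i
  define \<alpha>' where "\<alpha>' i = real (fst i)" for i :: "nat \<times> nat"
  define \<beta>' where "\<beta>' i = \<alpha> i * T + real q * pi / 2" for i
  have mid: "(\<lambda>x. (deriv ^^ q) (\<lambda>y. F x y) T) = (\<lambda>x. \<Sum>i\<in>I. c' i * cos (\<alpha>' i * x + \<beta>' i))"
  proof
    fix x
    show "(deriv ^^ q) (\<lambda>y. F x y) T = (\<Sum>i\<in>I. c' i * cos (\<alpha>' i * x + \<beta>' i))"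
      unfolding inner deriv_cos_sum[OF fin]
      by (intro sum.cong refl) (simp add: c'_def \<alpha>'_def \<beta>'_def \<beta>_def algebra_simps)
  qed
  have "pderiv2 p q F S T = (\<Sum>i\<in>I. c' i * \<alpha>' i ^ p * cos (\<alpha>' i * S + \<beta>' i + real p * pi / 2))"
    unfolding pderiv2_def mid deriv_cos_sum[OF fin] ..
  also have "\<dots> = (\<Sum>k=1..n. \<Sum>l=1..n. \<rho> (int k - int l) / real n * (- real l) ^ q * real k ^ p *
       cos (real k * S - real l * T + real (p + q) * pi / 2))"
    unfolding I_def sum.cartesian_product
  proof (rule sum.cong[OF refl])
    fix i assume "i \<in> {1..n} \<times> {1..n}"
    obtain k l where i: "i = (k, l)" by (cases i)
    have arg: "real k * S + (- real l * T + real q * pi / 2) + real p * pi / 2 =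
        real k * S - real l * T + real (p + q) * pi / 2"
      by (simp add: distrib_right add_divide_distrib)
    show "c' i * \<alpha>' i ^ p * cos (\<alpha>' i * S + \<beta>' i + real p * pi / 2) =
      (case i of (k, l) \<Rightarrow> \<rho> (int k - int l) / real n * (- real l) ^ q * real k ^ p *
       cos (real k * S - real l * T + real (p + q) * pi / 2))"
      unfolding i c'_def c_def \<alpha>'_def \<alpha>_def \<beta>'_def by (simp only: prod.case fst_conv snd_conv arg)
  qed
  finally have pd: "pderiv2 p q F S T = \<dots>" .
  have "pderiv2 p q F S T / real n ^ (p + q) =
      (\<Sum>k=1..n. \<Sum>l=1..n. (-1)^q * (\<rho> (int k - int l) * (wt p n k * wt q n l) *
       cos (real k * S - real l * T + real (p + q) * pi / 2)) / real n)"
    unfolding pd sum_divide_distrib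
  proof (intro sum.cong refl)
    fix k l
    have m: "(- real l) ^ q = (-1)^q * real l ^ q" by (rule power_minus)
    have w: "wt p n k * wt q n l = real k ^ p * real l ^ q / real n ^ (p + q)"
      by (simp add: wt_def power_divide power_add)
    show "\<rho> (int k - int l) / real n * (- real l) ^ q * real k ^ p *
       cos (real k * S - real l * T + real (p + q) * pi / 2) / real n ^ (p + q) =
      (-1)^q * (\<rho> (int k - int l) * (wt p n k * wt q n l) *
       cos (real k * S - real l * T + real (p + q) * pi / 2)) / real n"
      unfolding m w by (rule ring_helper)
  qed
  also have "\<dots> = (-1)^q * Gs \<rho> p q n (real (p + q) * pi / 2) S T / real n"
    unfolding Gs_def sum_divide_distrib sum_distrib_left by (intro sum.cong refl)
  finally show ?thesis .
qed


theorem lemma2: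
  fixes M :: "'w measure"
    and a b :: "nat \<Rightarrow> 'w \<Rightarrow> real"
    and \<rho> :: "int \<Rightarrow> real"
    and \<psi> :: "real \<Rightarrow> real"
    and p q :: nat
  assumes "prob_space M"
    and "centered_gaussian_seq M a"
    and "centered_gaussian_seq M b"
    and "prob_space.indep_var M (Pi\<^sub>M {1..} (\<lambda>_. borel)) (\<lambda>\<omega>. \<lambda>k\<in>{1..}. a k \<omega>)
                                (Pi\<^sub>M {1..} (\<lambda>_. borel)) (\<lambda>\<omega>. \<lambda>k\<in>{1..}. b k \<omega>)"
    and "\<And>k l. k \<ge> 1 \<Longrightarrow> l \<ge> 1 \<Longrightarrow>
           prob_space.expectation M (\<lambda>\<omega>. a k \<omega> * a l \<omega>) = \<rho> (int k - int l)"
    and "\<And>k l. k \<ge> 1 \<Longrightarrow> l \<ge> 1 \<Longrightarrow>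
           prob_space.expectation M (\<lambda>\<omega>. b k \<omega> * b l \<omega>) = \<rho> (int k - int l)"
    and "continuous_on UNIV \<psi>"
    and "\<And>x. \<psi> x > 0"
    and "\<And>x. \<psi> (x + 2 * pi) = \<psi> x"
    and "\<And>k. complex_of_real (\<rho> k) =
           integral {0..2*pi} (\<lambda>u. exp (- \<i> * of_int k * of_real u) * of_real (\<psi> u)) / (2 * pi)"
    and "p \<le> 4" and "q \<le> 4"
    and "compact K"
  shows "uniform_limit (UNIV \<times> K \<times> K)
           (\<lambda>n (s, u, v). pderiv2 p q (rn M a b n) (s + u / real n) (s + v / real n) / real n ^ (p + q))
           (\<lambda>(s, u, v). \<psi> s * (-1) ^ q * (deriv ^^ (p + q)) sinc (u - v))
           sequentially"
proof -
  note P = assms(1) and ga = assms(2) and gb = assms(3) and ind = assms(4)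
    and ca = assms(5) and cb = assms(6) and cont = assms(7) and per = assms(9)
    and rep = assms(10) and cK = assms(13)
  define m where "m = p + q"
  define \<theta> where "\<theta> = real m * pi / 2"
  have rnf: "\<And>s t. rn M a b n s t = (1 / real n) * (\<Sum>k=1..n. \<Sum>l=1..n. \<rho> (int k - int l) * cos (real k * s - real l * t))"
    for n using rn_formula[OF P ga gb ind ca cb] by blast
  have rc: "\<And>j. ((\<lambda>x. \<psi> x * cos (of_int j * x)) has_integral (2*pi*\<rho> j)) {0..2*pi}"
    using rep_facts(1)[OF cont rep] by blast
  have rs: "\<And>j. ((\<lambda>x. \<psi> x * sin (of_int j * x)) has_integral 0) {0..2*pi}"
    using rep_facts(2)[OF cont rep] by blast
  obtain B where B: "B > 0" "\<And>x. \<bar>\<psi> x\<bar> \<le> B" using psi_bounded[OF cont per] by blast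
  obtain R0 where R0: "\<And>x. x \<in> K \<Longrightarrow> norm x \<le> R0"
    using compact_imp_bounded[OF cK] by (auto simp: bounded_iff)
  define R where "R = max R0 0"
  have R: "R \<ge> 0" "\<And>x. x \<in> K \<Longrightarrow> \<bar>x\<bar> \<le> R"
    unfolding R_def using R0 by (simp, metis max.coboundedI1 real_norm_def)
  show ?thesis
    unfolding uniform_limit_iff
  proof (intro allI impI)
    fix e :: real assume e: "e > 0"
    define \<epsilon> where "\<epsilon> = e / 3"
    have eps: "\<epsilon> > 0" using e by (simp add: \<epsilon>_def)
    obtain \<eta> where eta: "\<eta> > 0" and uc: "\<And>x s. \<bar>sin ((x - s) / 2)\<bar> < \<eta> \<Longrightarrow> \<bar>\<psi> x - \<psi> s\<bar> < \<epsilon>"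
      using psi_uc[OF cont per eps] by blast
    define C where "C = max (R / \<eta>) (max (24 * B / (\<eta>^2 * e)) (3 * B * (real m + 2 * R) / e)) + 1"
    have ev: "eventually (\<lambda>n. C \<le> real n) sequentially"
    proof (rule eventually_sequentiallyI[of "nat \<lceil>C\<rceil>"])
      fix x :: nat assume "nat \<lceil>C\<rceil> \<le> x"
      then have "real (nat \<lceil>C\<rceil>) \<le> real x" by simp
      moreover have "C \<le> real (nat \<lceil>C\<rceil>)" by (rule real_nat_ceiling_ge)
      ultimately show "C \<le> real x" by linarith
    qed
    show "\<forall>\<^sub>F n in sequentially. \<forall>x\<in>UNIV \<times> K \<times> K.
        dist ((\<lambda>(s, u, v). pderiv2 p q (rn M a b n) (s + u / real n) (s + v / real n) / real n ^ (p + q)) x)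
             ((\<lambda>(s, u, v). \<psi> s * (-1) ^ q * (deriv ^^ (p + q)) sinc (u - v)) x) < e"
      using ev
    proof eventually_elim
      case (elim n)
      have "R / \<eta> \<le> max (R / \<eta>) (max (24 * B / (\<eta>^2 * e)) (3 * B * (real m + 2 * R) / e))"
        by (rule max.cobounded1)
      moreover have "R / \<eta> \<ge> 0" using R eta by simp
      ultimately have C1: "C \<ge> 1" unfolding C_def by linarith
      have n: "n > 0" using elim C1 by (cases n) auto
      have nR: "R / \<eta> \<le> real n" using elim unfolding C_def by linarith
      have n2: "24 * B / (\<eta>^2 * e) < real n" using elim unfolding C_def by linarith
      have n3: "3 * B * (real m + 2 * R) / e < real n" using elim unfolding C_def by linarith
      show ?case
      proof (intro ballI)
        fix x :: "real \<times> real \<times> real" assume "x \<in> UNIV \<times> K \<times> K"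
        then obtain s u v where x: "x = (s, u, v)" and u: "u \<in> K" and v: "v \<in> K" by auto
        define S where "S = s + u / real n"
        define T where "T = s + v / real n"
        have Ru: "\<bar>u\<bar> \<le> R" "\<bar>v\<bar> \<le> R" using R u v by auto
        have Rn: "R / real n \<le> \<eta>" using nR eta n by (simp add: field_simps)
        have Sc: "\<bar>S - s\<bar> \<le> \<eta>"
        proof -
          have "\<bar>S - s\<bar> = \<bar>u\<bar> / real n" by (simp add: S_def)
          also have "\<dots> \<le> R / real n" using Ru n by (intro divide_right_mono) auto
          finally show ?thesis using Rn by linarith
        qed
        have Tc: "\<bar>T - s\<bar> \<le> \<eta>"
        proof -
          have "\<bar>T - s\<bar> = \<bar>v\<bar> / real n" by (simp add: T_def)
          also have "\<dots> \<le> R / real n" using Ru n by (intro divide_right_mono) auto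
          finally show ?thesis using Rn by linarith
        qed
        define E where "E = (\<Sum>k=1..n. wt p n k * wt q n k * cos (real k * S - real k * T + \<theta>))"
        define G where "G = Gs \<rho> p q n \<theta> S T"
        have est1: "\<bar>G / real n - \<psi> s * E / real n\<bar> \<le> \<epsilon> + 8 * B / (\<eta>^2 * real n)"
          unfolding G_def E_def by (rule main_est[OF rc rs B(2) eta uc eps n Sc Tc])
        define f where "f y = y ^ m * cos (y * (u - v) + real m * pi / 2)" for y
        have Ef: "E = (\<Sum>k=1..n. f (real k / real n))"
          unfolding E_def f_def
        proof (intro sum.cong refl)
          fix k
          have "real k * S - real k * T = real k / real n * (u - v)"
            using n by (simp add: S_def T_def field_simps)
          then show "wt p n k * wt q n k * cos (real k * S - real k * T + \<theta>) =
              (real k / real n) ^ m * cos (real k / real n * (u - v) + real m * pi / 2)"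
            by (simp add: wt_def m_def \<theta>_def power_add)
        qed
        have est2: "\<bar>E / real n - gm m (u - v)\<bar> \<le> (real m + \<bar>u - v\<bar>) / real n"
        proof -
          have gmf: "gm m (u - v) = integral {0..1} f" unfolding gm_def f_def[abs_def] ..
          show ?thesis unfolding Ef gmf
        proof (rule riemann_lip[OF _ _ n])
          show "continuous_on {0..1} f" unfolding f_def by (intro continuous_intros)
          fix x y :: real assume "x \<in> {0..1}" "y \<in> {0..1}"
          then show "\<bar>f x - f y\<bar> \<le> (real m + \<bar>u - v\<bar>) * \<bar>x - y\<bar>"
            unfolding f_def by (rule lip_fm)
        qed
        qed
        have uv: "\<bar>u - v\<bar> \<le> 2 * R" using Ru by linarith
        have est2': "\<bar>\<psi> s\<bar> * \<bar>E / real n - gm m (u - v)\<bar> \<le> B * ((real m + 2 * R) / real n)"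
        proof (rule mult_mono)
          show "\<bar>\<psi> s\<bar> \<le> B" by (rule B(2))
          have "(real m + \<bar>u - v\<bar>) / real n \<le> (real m + 2 * R) / real n"
            using uv n by (intro divide_right_mono) auto
          then show "\<bar>E / real n - gm m (u - v)\<bar> \<le> (real m + 2 * R) / real n" using est2 by linarith
        qed (use B in auto)
        have pos1: "\<eta>^2 * e > 0" using eta e by simp
        have pos2: "\<eta>^2 * real n > 0" using eta n by simp
        have "24 * B < real n * (\<eta>^2 * e)" using n2 pos1 by (simp add: pos_divide_less_eq)
        then have "8 * B < e / 3 * (\<eta>^2 * real n)" by (simp add: algebra_simps)
        then have b2: "8 * B / (\<eta>^2 * real n) < e / 3" using pos2 by (simp add: pos_divide_less_eq)
        have "3 * B * (real m + 2 * R) < real n * e" using n3 e by (simp add: pos_divide_less_eq)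
        then have "B * (real m + 2 * R) < e / 3 * real n" by (simp add: algebra_simps)
        then have "B * (real m + 2 * R) / real n < e / 3" using n by (simp add: pos_divide_less_eq)
        then have b3: "B * ((real m + 2 * R) / real n) < e / 3" by simp
        have pdf: "pderiv2 p q (rn M a b n) S T / real n ^ (p + q) = (-1)^q * G / real n"
          unfolding G_def \<theta>_def m_def by (rule pderiv_formula[OF rnf n])
        have ds: "(deriv ^^ (p + q)) sinc (u - v) = gm m (u - v)" by (simp add: deriv_sinc m_def)
        have "\<bar>G / real n - \<psi> s * gm m (u - v)\<bar> \<le>
            \<bar>G / real n - \<psi> s * E / real n\<bar> + \<bar>\<psi> s\<bar> * \<bar>E / real n - gm m (u - v)\<bar>"
        proof -
          have "G / real n - \<psi> s * gm m (u - v) = (G / real n - \<psi> s * E / real n) + \<psi> s * (E / real n - gm m (u - v))"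
            by (simp add: algebra_simps)
          then show ?thesis by (metis abs_mult abs_triangle_ineq)
        qed
        also have "\<dots> < e" using est1 est2' b2 b3 unfolding \<epsilon>_def by linarith
        finally have fin: "\<bar>G / real n - \<psi> s * gm m (u - v)\<bar> < e" .
        have "dist ((-1)^q * G / real n) (\<psi> s * (-1) ^ q * gm m (u - v)) = \<bar>G / real n - \<psi> s * gm m (u - v)\<bar>"
        proof -
          have "(-1)^q * G / real n - \<psi> s * (-1) ^ q * gm m (u - v) = (-1)^q * (G / real n - \<psi> s * gm m (u - v))"
            by (simp add: algebra_simps)
          then show ?thesis by (simp add: dist_real_def abs_mult)
        qed
        then show "dist ((\<lambda>(s, u, v). pderiv2 p q (rn M a b n) (s + u / real n) (s + v / real n) / real n ^ (p + q)) x)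
             ((\<lambda>(s, u, v). \<psi> s * (-1) ^ q * (deriv ^^ (p + q)) sinc (u - v)) x) < e"
          using fin unfolding x by (simp add: pdf[unfolded S_def T_def] ds)
      qed
    qed
  qed
qed

end
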